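(* Let $S$ be a graded reduced affine monoid and $\tilde S$ as in the context. Suppose the defining congruence $\sim_S$ is generated by $\{(x^{\lambda},x^{\mu})\mid(\lambda,\mu)\in\Lambda\}$ for some $\Lambda\subset\mathbb{N}_0^{\mathcal{A}(S)}\times\mathbb{N}_0^{\mathcal{A}(S)}$. For each $\lambda\in\mathbb{N}_0^{\mathcal{A}(S)}$ such that $(\lambda,\mu)\in\Lambda$ or $(\mu,\lambda)\in\Lambda$ for some $\mu$, and each integer $0\le i\le|a^{\lambda}|$, choose $\lambda[i]\in\mathbb{N}_0^{\mathcal{A}(\tilde S)}$ with $\kappa(\lambda[i])=\lambda$ and $\delta(\lambda[i])=i$. Then the defining congruence $\sim_{\tilde S}$ of $\tilde S$ is generated by $\{(x^{\lambda[i]},x^{\mu[i]})\mid(\lambda,\mu)\in\Lambda,\ 0\le i\le|a^{\lambda}|\}\cup\{(x_{a[k]}x_{b[l]},x_{a[k+1]}x_{b[l-1]})\mid a,b\in\mathcal{A}(S),\ 0\le k\le|a|-1,\ 1\le l\le|b|\}$.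
   Context: A monoid is a commutative cancellative semigroup with identity; affine means a finitely generated submonoid of a finitely generated free abelian group; reduced means the identity is the only unit. $S$ (written multiplicatively) is graded: $S=\bigsqcup_{d\in\mathbb{N}_0}S_d$ with $S_dS_e\subseteq S_{d+e}$, $|s|=d$ for $s\in S_d$. $\mathcal{A}(S)$ is the set of atoms; $a^{\lambda}=\prod_a a^{\lambda(a)}$. For a reduced affine monoid $T$ with atoms $\mathcal{A}(T)$, its defining congruence $\sim_T$ is the congruence on the free commutative monoid $\{x^{\alpha}\mid\alpha\in\mathbb{N}_0^{\mathcal{A}(T)}\}$ on indeterminates $x_t$ ($t\in\mathcal{A}(T)$) with $x^{\alpha}\sim_T x^{\gamma}$ iff $\prod t^{\alpha(t)}=\prod t^{\gamma(t)}$ in $T$. Define $\tilde S=\{s[i]\mid s\in S,\ 0\le i\le|s|\}$ with $s[i]\cdot t[j]=(st)[i+j]$; its atoms are $\mathcal{A}(\tilde S)=\{a[i]\mid a\in\mathcal{A}(S),0\le i\le|a|\}$. Define $\kappa:\mathbb{N}_0^{\mathcal{A}(\tilde S)}\to\mathbb{N}_0^{\mathcal{A}(S)}$, $\kappa(\lambda)(a)=\sum_{i=0}^{|a|}\lambda(a[i])$, and $\delta(\lambda)=\sum_{a[i]}i\,\lambda(a[i])$. *)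

theory Defs
  imports Main "HOL-Library.Multiset" "HOL-Library.Product_Plus" "HOL-Library.Function_Algebras"
begin

definition is_submonoid :: "'a::comm_monoid_add set \<Rightarrow> bool" where
  "is_submonoid T \<longleftrightarrow> 0 \<in> T \<and> (\<forall>s\<in>T. \<forall>t\<in>T. s + t \<in> T)"

definition mon_units :: "'a::comm_monoid_add set \<Rightarrow> 'a set" where
  "mon_units T = {u \<in> T. \<exists>v\<in>T. u + v = 0}"

definition reduced :: "'a::comm_monoid_add set \<Rightarrow> bool" where
  "reduced T \<longleftrightarrow> mon_units T = {0}"

definition affine :: "('n::finite \<Rightarrow> int) set \<Rightarrow> bool" where
  "affine T \<longleftrightarrow> is_submonoid T \<and>
     (\<exists>G. finite G \<and> G \<subseteq> T \<and> T = {sum_mset \<alpha> | \<alpha>. set_mset \<alpha> \<subseteq> G})"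

definition atoms :: "'a::comm_monoid_add set \<Rightarrow> 'a set" where
  "atoms T = {a \<in> T. a \<notin> mon_units T \<and>
      (\<forall>b\<in>T. \<forall>c\<in>T. a = b + c \<longrightarrow> b \<in> mon_units T \<or> c \<in> mon_units T)}"

definition graded :: "'a::comm_monoid_add set \<Rightarrow> ('a \<Rightarrow> nat) \<Rightarrow> bool" where
  "graded T deg \<longleftrightarrow> (\<forall>s\<in>T. \<forall>t\<in>T. deg (s + t) = deg s + deg t)"

text \<open>The monoid tilde S: s[i] is represented as the pair (s, i).\<close>
definition tilde :: "'a::comm_monoid_add set \<Rightarrow> ('a \<Rightarrow> nat) \<Rightarrow> ('a \<times> nat) set" where
  "tilde S deg = {(s, i) | s i. s \<in> S \<and> i \<le> deg s}"

text \<open>Elements of the free commutative monoid on a set A of indeterminates x_a are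
  represented as multisets over A; x^\<alpha> corresponds to the multiset \<alpha>.\<close>
definition defcong :: "'a::comm_monoid_add set \<Rightarrow> ('a multiset \<times> 'a multiset) set" where
  "defcong T = {(\<alpha>, \<gamma>). set_mset \<alpha> \<subseteq> atoms T \<and> set_mset \<gamma> \<subseteq> atoms T \<and>
                         sum_mset \<alpha> = sum_mset \<gamma>}"

inductive_set gen_cong :: "'b set \<Rightarrow> ('b multiset \<times> 'b multiset) set
      \<Rightarrow> ('b multiset \<times> 'b multiset) set" for A R where
  base: "(\<alpha>, \<gamma>) \<in> R \<Longrightarrow> (\<alpha>, \<gamma>) \<in> gen_cong A R"
| refl: "set_mset \<alpha> \<subseteq> A \<Longrightarrow> (\<alpha>, \<alpha>) \<in> gen_cong A R"
| sym: "(\<alpha>, \<gamma>) \<in> gen_cong A R \<Longrightarrow> (\<gamma>, \<alpha>) \<in> gen_cong A R"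
| trans: "(\<alpha>, \<beta>) \<in> gen_cong A R \<Longrightarrow> (\<beta>, \<gamma>) \<in> gen_cong A R \<Longrightarrow> (\<alpha>, \<gamma>) \<in> gen_cong A R"
| add: "(\<alpha>, \<gamma>) \<in> gen_cong A R \<Longrightarrow> set_mset \<beta> \<subseteq> A \<Longrightarrow> (\<alpha> + \<beta>, \<gamma> + \<beta>) \<in> gen_cong A R"

definition kappa :: "('a \<times> nat) multiset \<Rightarrow> 'a multiset" where
  "kappa lam = image_mset fst lam"

definition delta :: "('a \<times> nat) multiset \<Rightarrow> nat" where
  "delta lam = sum_mset (image_mset snd lam)"

end

theory Submission
  imports Defs
begin

lemma kappa_simps[simp]:
  "kappa {#} = {#}" "kappa (add_mset x M) = add_mset (fst x) (kappa M)" "kappa (M + N) = kappa M + kappa N"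
  by (auto simp: kappa_def)

lemma delta_simps[simp]:
  "delta {#} = 0" "delta (add_mset x M) = snd x + delta M" "delta (M + N) = delta M + delta N"
  by (auto simp: delta_def)

lemma size_kappa[simp]: "size (kappa M) = size M" by (simp add: kappa_def)

lemma sum_mset_pair: "sum_mset (M :: ('a::comm_monoid_add \<times> 'b::comm_monoid_add) multiset)
   = (sum_mset (image_mset fst M), sum_mset (image_mset snd M))"
  by (induction M) (auto simp: zero_prod_def)

lemma sum_mset_tilde: "sum_mset M = (sum_mset (kappa M), delta M)"
  by (simp add: sum_mset_pair kappa_def delta_def)

lemma delta_pos: "delta M > 0 \<Longrightarrow> \<exists>x\<in>#M. snd x > 0"
  by (induction M) auto

definition swaps :: "'a::comm_monoid_add set \<Rightarrow> ('a \<Rightarrow> nat) \<Rightarrow> (('a \<times> nat) multiset \<times> ('a \<times> nat) multiset) set" where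
  "swaps S deg = {({#(a, k), (b, l)#}, {#(a, k + 1), (b, l - 1)#}) | a b k l.
                  a \<in> atoms S \<and> b \<in> atoms S \<and> k < deg a \<and> 1 \<le> l \<and> l \<le> deg b}"

context
  fixes S :: "'a::comm_monoid_add set" and deg :: "'a \<Rightarrow> nat"
  assumes sub: "is_submonoid S" and red: "reduced S" and grad: "graded S deg"
begin

lemma zeroS: "0 \<in> S" using sub by (simp add: is_submonoid_def)
lemma addS: "s \<in> S \<Longrightarrow> t \<in> S \<Longrightarrow> s + t \<in> S" using sub by (simp add: is_submonoid_def)
lemma deg_add: "s \<in> S \<Longrightarrow> t \<in> S \<Longrightarrow> deg (s + t) = deg s + deg t" using grad by (simp add: graded_def)
lemma deg0: "deg 0 = 0" using deg_add[OF zeroS zeroS] by simp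
lemma unitsS: "mon_units S = {0}" using red by (simp add: reduced_def)

lemma atomsS_sub: "atoms S \<subseteq> S" by (auto simp: atoms_def)
lemma atomsS_nz: "a \<in> atoms S \<Longrightarrow> a \<noteq> 0" by (auto simp: atoms_def unitsS)

lemma sum_in_S: "set_mset M \<subseteq> S \<Longrightarrow> sum_mset M \<in> S"
  by (induction M) (auto simp: zeroS addS)

lemma deg_sum: "set_mset M \<subseteq> S \<Longrightarrow> deg (sum_mset M) = sum_mset (image_mset deg M)"
  by (induction M) (auto simp: deg0 deg_add sum_in_S)

lemma units_tilde: "mon_units (tilde S deg) = {(0, 0)}"
proof -
  have "u = 0 \<and> i = 0" if "(u, i) \<in> mon_units (tilde S deg)" for u i
  proof -
    from that obtain v j where "(u, i) \<in> tilde S deg" "(v, j) \<in> tilde S deg" "(u, i) + (v, j) = 0"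
      by (auto simp: mon_units_def)
    then have "u \<in> S" "v \<in> S" "u + v = 0" "i \<le> deg u" by (auto simp: tilde_def zero_prod_def)
    then have "u \<in> mon_units S" by (auto simp: mon_units_def)
    then have "u = 0" by (simp add: unitsS)
    with \<open>i \<le> deg u\<close> show ?thesis by (simp add: deg0)
  qed
  moreover have "(0, 0) \<in> mon_units (tilde S deg)"
    by (auto simp: mon_units_def tilde_def zeroS deg0 zero_prod_def intro!: exI[of _ 0])
  ultimately show ?thesis by auto
qed

lemma atoms_tilde: "atoms (tilde S deg) = {(a, i). a \<in> atoms S \<and> i \<le> deg a}"
proof (intro set_eqI iffI)
  fix x assume x: "x \<in> atoms (tilde S deg)"
  obtain s i where xs: "x = (s, i)" by (cases x)
  have sT: "s \<in> S" "i \<le> deg s" using x xs by (auto simp: atoms_def tilde_def)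
  have nu: "(s, i) \<noteq> (0, 0)" using x xs by (auto simp: atoms_def units_tilde)
  have s0: "s \<noteq> 0" using nu sT deg0 by auto
  have "s \<in> atoms S"
    unfolding atoms_def
  proof (intro CollectI conjI ballI impI sT)
    show "s \<notin> mon_units S" using s0 unitsS by simp
    fix b c assume bc: "b \<in> S" "c \<in> S" "s = b + c"
    show "b \<in> mon_units S \<or> c \<in> mon_units S"
    proof -
      define j where "j = min i (deg b)"
      have "i \<le> deg b + deg c" using sT bc deg_add by simp
      then have "(b, j) \<in> tilde S deg" "(c, i - j) \<in> tilde S deg"
        using bc by (auto simp: tilde_def j_def)
      moreover have "(s, i) = (b, j) + (c, i - j)" using bc by (simp add: j_def)
      ultimately have "(b, j) \<in> mon_units (tilde S deg) \<or> (c, i - j) \<in> mon_units (tilde S deg)"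
        using x xs unfolding atoms_def by blast
      then have "b = 0 \<or> c = 0" by (auto simp: units_tilde)
      then show ?thesis using unitsS by auto
    qed
  qed
  then show "x \<in> {(a, i). a \<in> atoms S \<and> i \<le> deg a}" using xs sT by auto
next
  fix x assume "x \<in> {(a, i). a \<in> atoms S \<and> i \<le> deg a}"
  then obtain a i where x: "x = (a, i)" "a \<in> atoms S" "i \<le> deg a" by auto
  have aS: "a \<in> S" "a \<noteq> 0" using x atomsS_sub atomsS_nz by auto
  show "x \<in> atoms (tilde S deg)"
    unfolding atoms_def
  proof (intro CollectI conjI ballI impI)
    show "x \<in> tilde S deg" using x aS by (auto simp: tilde_def)
    show "x \<notin> mon_units (tilde S deg)" using x aS by (simp add: units_tilde)
    fix y z assume yz: "y \<in> tilde S deg" "z \<in> tilde S deg" "x = y + z"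
    obtain b j c k where yzd: "y = (b, j)" "z = (c, k)" by (cases y, cases z)
    have "b \<in> S" "c \<in> S" "j \<le> deg b" "k \<le> deg c" using yz yzd by (auto simp: tilde_def)
    moreover have "a = b + c" using yz yzd x by simp
    ultimately have "b \<in> mon_units S \<or> c \<in> mon_units S"
      using x(2) unfolding atoms_def by blast
    then have "b = 0 \<or> c = 0" using unitsS by simp
    then show "y \<in> mon_units (tilde S deg) \<or> z \<in> mon_units (tilde S deg)"
      using \<open>j \<le> deg b\<close> \<open>k \<le> deg c\<close> yzd by (auto simp: units_tilde deg0)
  qed
qed

lemma kappa_atoms: "set_mset M \<subseteq> atoms (tilde S deg) \<Longrightarrow> set_mset (kappa M) \<subseteq> atoms S"
  by (auto simp: atoms_tilde kappa_def)

lemma delta_bound: "set_mset M \<subseteq> atoms (tilde S deg) \<Longrightarrow> delta M \<le> deg (sum_mset (kappa M))"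
proof (induction M)
  case empty then show ?case by simp
next
  case (add x M)
  obtain a i where x: "x = (a, i)" by (cases x)
  have a: "a \<in> atoms S" "i \<le> deg a" using add.prems x by (auto simp: atoms_tilde)
  have "sum_mset (kappa M) \<in> S" using kappa_atoms[of M] add.prems atomsS_sub by (intro sum_in_S) auto
  then have "deg (a + sum_mset (kappa M)) = deg a + deg (sum_mset (kappa M))"
    using a atomsS_sub deg_add by auto
  then show ?case using add a x by auto
qed

lemma exists_lift: "set_mset L \<subseteq> atoms S \<Longrightarrow> i \<le> deg (sum_mset L) \<Longrightarrow>
   \<exists>M. set_mset M \<subseteq> atoms (tilde S deg) \<and> kappa M = L \<and> delta M = i"
proof (induction L arbitrary: i)
  case empty then show ?case using deg0 by (auto intro!: exI[of _ "{#}"])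
next
  case (add a L)
  have aS: "a \<in> S" "sum_mset L \<in> S" using add.prems atomsS_sub by (auto intro!: sum_in_S)
  define j where "j = min i (deg a)"
  have "i - j \<le> deg (sum_mset L)" using add.prems aS deg_add by (auto simp: j_def)
  then obtain M where M: "set_mset M \<subseteq> atoms (tilde S deg)" "kappa M = L" "delta M = i - j"
    using add by auto
  show ?case using M add.prems
    by (intro exI[of _ "add_mset (a, j) M"]) (auto simp: atoms_tilde j_def)
qed


abbreviation "At \<equiv> atoms (tilde S deg)"

lemma swap_step:
  assumes SW: "swaps S deg \<subseteq> R" and rho: "set_mset \<rho> \<subseteq> At"
    and a: "a \<in> atoms S" and b: "b \<in> atoms S" and k: "k < deg a" and m: "1 \<le> m" "m \<le> deg b"
  shows "(add_mset (a, k) (add_mset (b, m) \<rho>), add_mset (a, k + 1) (add_mset (b, m - 1) \<rho>)) \<in> gen_cong At R"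
proof -
  have "({#(a, k), (b, m)#}, {#(a, k + 1), (b, m - 1)#}) \<in> R"
    using SW a b k m unfolding swaps_def by blast
  then have "({#(a, k), (b, m)#}, {#(a, k + 1), (b, m - 1)#}) \<in> gen_cong At R"
    by (rule gen_cong.base)
  from gen_cong.add[OF this rho] show ?thesis by simp
qed

lemma inner:
  assumes SW: "swaps S deg \<subseteq> R"
    and H: "\<forall>\<alpha>' \<gamma>'. size \<alpha>' = n \<longrightarrow> set_mset \<alpha>' \<subseteq> At \<longrightarrow> set_mset \<gamma>' \<subseteq> At \<longrightarrow>
              kappa \<alpha>' = kappa \<gamma>' \<longrightarrow> delta \<alpha>' = delta \<gamma>' \<longrightarrow> (\<alpha>', \<gamma>') \<in> gen_cong At R"
    and a: "a \<in> atoms S" and l: "l \<le> deg a"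
  shows "\<forall>k \<alpha>' \<gamma>'. l = k + d \<longrightarrow> size \<alpha>' = n \<longrightarrow> set_mset \<alpha>' \<subseteq> At \<longrightarrow> set_mset \<gamma>' \<subseteq> At \<longrightarrow>
              kappa \<alpha>' = kappa \<gamma>' \<longrightarrow> delta \<alpha>' = delta \<gamma>' + d \<longrightarrow>
              (add_mset (a, k) \<alpha>', add_mset (a, l) \<gamma>') \<in> gen_cong At R"
proof (induction d)
  case 0
  show ?case
  proof (intro allI impI)
    fix k \<alpha>' \<gamma>'
    assume A: "l = k + 0" "size \<alpha>' = n" "set_mset \<alpha>' \<subseteq> At" "set_mset \<gamma>' \<subseteq> At"
      "kappa \<alpha>' = kappa \<gamma>'" "delta \<alpha>' = delta \<gamma>' + 0"
    have "(\<alpha>', \<gamma>') \<in> gen_cong At R" using H A by auto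
    moreover have "set_mset {#(a, k)#} \<subseteq> At" using A a l by (auto simp: atoms_tilde)
    ultimately have "(\<alpha>' + {#(a, k)#}, \<gamma>' + {#(a, k)#}) \<in> gen_cong At R"
      by (rule gen_cong.add)
    then show "(add_mset (a, k) \<alpha>', add_mset (a, l) \<gamma>') \<in> gen_cong At R" using A by simp
  qed
next
  case (Suc d)
  show ?case
  proof (intro allI impI)
    fix k \<alpha>' \<gamma>'
    assume A: "l = k + Suc d" "size \<alpha>' = n" "set_mset \<alpha>' \<subseteq> At" "set_mset \<gamma>' \<subseteq> At"
      "kappa \<alpha>' = kappa \<gamma>'" "delta \<alpha>' = delta \<gamma>' + Suc d"
    have "delta \<alpha>' > 0" using A(6) by simp
    then obtain x where x: "x \<in># \<alpha>'" "snd x > 0" using delta_pos by blast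
    obtain b m where bm: "x = (b, m)" by (cases x)
    obtain \<rho> where rho: "\<alpha>' = add_mset (b, m) \<rho>" using x bm by (metis multi_member_split)
    have b: "b \<in> atoms S" "m \<le> deg b" "1 \<le> m" using A(3) rho x bm by (auto simp: atoms_tilde)
    have rhoA: "set_mset \<rho> \<subseteq> At" using A(3) rho by auto
    have s1: "(add_mset (a, k) \<alpha>', add_mset (a, k + 1) (add_mset (b, m - 1) \<rho>)) \<in> gen_cong At R"
      unfolding rho using swap_step[OF SW rhoA a b(1) _ b(3) b(2)] A(1) l by simp
    have s2: "(add_mset (a, k + 1) (add_mset (b, m - 1) \<rho>), add_mset (a, l) \<gamma>') \<in> gen_cong At R"
      using Suc.IH[rule_format, of "k + 1" "add_mset (b, m - 1) \<rho>" \<gamma>'] A rho b rhoA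
      by (auto simp: atoms_tilde)
    show "(add_mset (a, k) \<alpha>', add_mset (a, l) \<gamma>') \<in> gen_cong At R"
      by (rule gen_cong.trans[OF s1 s2])
  qed
qed

lemma connect_n:
  assumes SW: "swaps S deg \<subseteq> R"
  shows "\<forall>\<alpha> \<gamma>. size \<alpha> = n \<longrightarrow> set_mset \<alpha> \<subseteq> At \<longrightarrow> set_mset \<gamma> \<subseteq> At \<longrightarrow>
              kappa \<alpha> = kappa \<gamma> \<longrightarrow> delta \<alpha> = delta \<gamma> \<longrightarrow> (\<alpha>, \<gamma>) \<in> gen_cong At R"
proof (induction n)
  case 0
  show ?case
  proof (intro allI impI)
    fix \<alpha> \<gamma> :: "('a \<times> nat) multiset"
    assume A: "size \<alpha> = 0" "set_mset \<alpha> \<subseteq> At" "set_mset \<gamma> \<subseteq> At" "kappa \<alpha> = kappa \<gamma>" "delta \<alpha> = delta \<gamma>"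
    then have "\<alpha> = {#}" by simp
    moreover have "\<gamma> = {#}" using A by (metis calculation kappa_simps(1) size_eq_0_iff_empty size_kappa)
    ultimately show "(\<alpha>, \<gamma>) \<in> gen_cong At R" by (auto intro: gen_cong.refl)
  qed
next
  case (Suc n)
  show ?case
  proof (intro allI impI)
    fix \<alpha> \<gamma> :: "('a \<times> nat) multiset"
    assume A: "size \<alpha> = Suc n" "set_mset \<alpha> \<subseteq> At" "set_mset \<gamma> \<subseteq> At" "kappa \<alpha> = kappa \<gamma>" "delta \<alpha> = delta \<gamma>"
    obtain x \<alpha>' where xa: "\<alpha> = add_mset x \<alpha>'" using A(1) by (metis size_eq_Suc_imp_eq_union)
    obtain a k where x: "x = (a, k)" by (cases x)
    have "a \<in># kappa \<gamma>" using A(4) xa x by (metis kappa_simps(2) fst_conv union_single_eq_member)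
    then obtain y where y: "y \<in># \<gamma>" "fst y = a" by (auto simp: kappa_def)
    obtain l where yl: "y = (a, l)" using y by (cases y) auto
    obtain \<gamma>' where ga: "\<gamma> = add_mset (a, l) \<gamma>'" using y yl by (metis multi_member_split)
    have ak: "a \<in> atoms S" "k \<le> deg a" "l \<le> deg a" using A(2,3) xa x ga by (auto simp: atoms_tilde)
    have sz: "size \<alpha>' = n" "size \<gamma>' = n" using A xa ga
      by (simp, metis size_kappa kappa_simps(2) A(1) xa ga size_add_mset nat.inject)
    have kk: "kappa \<alpha>' = kappa \<gamma>'" using A(4) xa ga x by simp
    have dd: "k + delta \<alpha>' = l + delta \<gamma>'" using A(5) xa ga x by simp
    have sa: "set_mset \<alpha>' \<subseteq> At" "set_mset \<gamma>' \<subseteq> At" using A xa ga by auto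
    show "(\<alpha>, \<gamma>) \<in> gen_cong At R"
    proof (cases "k \<le> l")
      case True
      have "(add_mset (a, k) \<alpha>', add_mset (a, l) \<gamma>') \<in> gen_cong At R"
        using inner[OF SW Suc.IH ak(1) ak(3), of "l - k", rule_format, of k \<alpha>' \<gamma>'] True sz sa kk dd
        by simp
      then show ?thesis using xa ga x by simp
    next
      case False
      have "(add_mset (a, l) \<gamma>', add_mset (a, k) \<alpha>') \<in> gen_cong At R"
        using inner[OF SW Suc.IH ak(1) ak(2), of "k - l", rule_format, of l \<gamma>' \<alpha>'] False sz sa kk dd
        by simp
      then show ?thesis using xa ga x by (simp add: gen_cong.sym)
    qed
  qed
qed

lemma connect:
  assumes "swaps S deg \<subseteq> R" "set_mset \<alpha> \<subseteq> At" "set_mset \<gamma> \<subseteq> At"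
    "kappa \<alpha> = kappa \<gamma>" "delta \<alpha> = delta \<gamma>"
  shows "(\<alpha>, \<gamma>) \<in> gen_cong At R"
  using connect_n[OF assms(1)] assms(2-) by blast


lemma claim:
  assumes SW: "swaps S deg \<subseteq> R"
    and gen: "gen_cong (atoms S) \<Lambda> = defcong S"
    and lift_ok: "\<And>lam i. (\<exists>mu. (lam, mu) \<in> \<Lambda> \<or> (mu, lam) \<in> \<Lambda>) \<Longrightarrow> i \<le> deg (sum_mset lam) \<Longrightarrow>
         set_mset (lift lam i) \<subseteq> At \<and> kappa (lift lam i) = lam \<and> delta (lift lam i) = i"
    and LR: "\<And>lam mu i. (lam, mu) \<in> \<Lambda> \<Longrightarrow> i \<le> deg (sum_mset lam) \<Longrightarrow> (lift lam i, lift mu i) \<in> R"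
    and P: "(L1, L2) \<in> gen_cong (atoms S) \<Lambda>"
  shows "\<forall>\<alpha> \<gamma>. set_mset \<alpha> \<subseteq> At \<longrightarrow> set_mset \<gamma> \<subseteq> At \<longrightarrow> kappa \<alpha> = L1 \<longrightarrow> kappa \<gamma> = L2 \<longrightarrow>
           delta \<alpha> = delta \<gamma> \<longrightarrow> (\<alpha>, \<gamma>) \<in> gen_cong At R"
  using P
proof (induction rule: gen_cong.induct)
  case (base lam mu)
  have dc: "(lam, mu) \<in> defcong S" using base gen gen_cong.base by blast
  show ?case
  proof (intro allI impI)
    fix \<alpha> \<gamma> :: "('a \<times> nat) multiset"
    assume A: "set_mset \<alpha> \<subseteq> At" "set_mset \<gamma> \<subseteq> At" "kappa \<alpha> = lam" "kappa \<gamma> = mu" "delta \<alpha> = delta \<gamma>"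
    define i where "i = delta \<alpha>"
    have il: "i \<le> deg (sum_mset lam)" using delta_bound[OF A(1)] A(3) by (simp add: i_def)
    have im: "i \<le> deg (sum_mset mu)" using il dc by (simp add: defcong_def)
    have L1: "set_mset (lift lam i) \<subseteq> At \<and> kappa (lift lam i) = lam \<and> delta (lift lam i) = i"
      using lift_ok il base by blast
    have L2: "set_mset (lift mu i) \<subseteq> At \<and> kappa (lift mu i) = mu \<and> delta (lift mu i) = i"
      using lift_ok im base by blast
    have c1: "(\<alpha>, lift lam i) \<in> gen_cong At R" using connect[OF SW A(1)] L1 A by (simp add: i_def)
    have c2: "(lift lam i, lift mu i) \<in> gen_cong At R" using LR[OF base il] by (rule gen_cong.base)
    have c3: "(lift mu i, \<gamma>) \<in> gen_cong At R" using connect[OF SW _ A(2)] L2 A by (simp add: i_def)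
    show "(\<alpha>, \<gamma>) \<in> gen_cong At R" using c1 c2 c3 by (meson gen_cong.trans)
  qed
next
  case (refl L)
  then show ?case using connect[OF SW] by blast
next
  case (sym L1 L2)
  show ?case
  proof (intro allI impI)
    fix \<alpha> \<gamma> :: "('a \<times> nat) multiset"
    assume A: "set_mset \<alpha> \<subseteq> At" "set_mset \<gamma> \<subseteq> At" "kappa \<alpha> = L2" "kappa \<gamma> = L1" "delta \<alpha> = delta \<gamma>"
    have "(\<gamma>, \<alpha>) \<in> gen_cong At R" using sym.IH A by auto
    then show "(\<alpha>, \<gamma>) \<in> gen_cong At R" by (rule gen_cong.sym)
  qed
next
  case (trans L1 B L2)
  have dc: "(L1, B) \<in> defcong S" using trans gen by blast
  show ?case
  proof (intro allI impI)
    fix \<alpha> \<gamma> :: "('a \<times> nat) multiset"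
    assume A: "set_mset \<alpha> \<subseteq> At" "set_mset \<gamma> \<subseteq> At" "kappa \<alpha> = L1" "kappa \<gamma> = L2" "delta \<alpha> = delta \<gamma>"
    have "delta \<alpha> \<le> deg (sum_mset B)" using delta_bound[OF A(1)] A(3) dc by (simp add: defcong_def)
    then obtain \<theta> where th: "set_mset \<theta> \<subseteq> At" "kappa \<theta> = B" "delta \<theta> = delta \<alpha>"
      using exists_lift[of B "delta \<alpha>"] dc by (auto simp: defcong_def)
    have "(\<alpha>, \<theta>) \<in> gen_cong At R" using trans.IH(1) A th by auto
    moreover have "(\<theta>, \<gamma>) \<in> gen_cong At R" using trans.IH(2) A th by auto
    ultimately show "(\<alpha>, \<gamma>) \<in> gen_cong At R" by (rule gen_cong.trans)
  qed
next
  case (add L1 L2 B)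
  have dc: "(L1, L2) \<in> defcong S" using add gen by blast
  show ?case
  proof (intro allI impI)
    fix \<alpha> \<gamma> :: "('a \<times> nat) multiset"
    assume A: "set_mset \<alpha> \<subseteq> At" "set_mset \<gamma> \<subseteq> At" "kappa \<alpha> = L1 + B" "kappa \<gamma> = L2 + B" "delta \<alpha> = delta \<gamma>"
    obtain \<alpha>1 \<alpha>2 where sp: "\<alpha> = \<alpha>1 + \<alpha>2" "kappa \<alpha>1 = L1" "kappa \<alpha>2 = B"
      using image_mset_eq_plusD[of fst \<alpha> L1 B] A(3) unfolding kappa_def by auto
    have a12: "set_mset \<alpha>1 \<subseteq> At" "set_mset \<alpha>2 \<subseteq> At" using A(1) sp by auto
    have "delta \<alpha>1 \<le> deg (sum_mset L2)" using delta_bound[OF a12(1)] sp dc by (simp add: defcong_def)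
    then obtain \<gamma>1 where g1: "set_mset \<gamma>1 \<subseteq> At" "kappa \<gamma>1 = L2" "delta \<gamma>1 = delta \<alpha>1"
      using exists_lift[of L2 "delta \<alpha>1"] dc by (auto simp: defcong_def)
    have "(\<alpha>1, \<gamma>1) \<in> gen_cong At R" using add.IH a12 g1 sp by auto
    from gen_cong.add[OF this a12(2)] have c1: "(\<alpha>, \<gamma>1 + \<alpha>2) \<in> gen_cong At R" using sp by simp
    have c2: "(\<gamma>1 + \<alpha>2, \<gamma>) \<in> gen_cong At R"
      using connect[OF SW _ A(2), of "\<gamma>1 + \<alpha>2"] g1 a12 sp A by auto
    show "(\<alpha>, \<gamma>) \<in> gen_cong At R" by (rule gen_cong.trans[OF c1 c2])
  qed
qed

lemma defcong_tilde_closed: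
  assumes "(\<alpha>, \<gamma>) \<in> gen_cong At R" and "R \<subseteq> defcong (tilde S deg)"
  shows "(\<alpha>, \<gamma>) \<in> defcong (tilde S deg)"
  using assms by (induction rule: gen_cong.induct) (auto simp: defcong_def)

end

theorem theorem4p4:
  fixes S :: "('n::finite \<Rightarrow> int) set"
    and deg :: "('n \<Rightarrow> int) \<Rightarrow> nat"
    and \<Lambda> :: "(('n \<Rightarrow> int) multiset \<times> ('n \<Rightarrow> int) multiset) set"
    and lift :: "('n \<Rightarrow> int) multiset \<Rightarrow> nat \<Rightarrow> (('n \<Rightarrow> int) \<times> nat) multiset"
  assumes aff: "affine S"
    and red: "reduced S"
    and grad: "graded S deg"
    and Lam_sub: "\<forall>(lam, mu) \<in> \<Lambda>. set_mset lam \<subseteq> atoms S \<and> set_mset mu \<subseteq> atoms S"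
    and gen: "gen_cong (atoms S) \<Lambda> = defcong S"
    and lift_ok: "\<And>lam i. (\<exists>mu. (lam, mu) \<in> \<Lambda> \<or> (mu, lam) \<in> \<Lambda>) \<Longrightarrow> i \<le> deg (sum_mset lam) \<Longrightarrow>
         set_mset (lift lam i) \<subseteq> atoms (tilde S deg) \<and> kappa (lift lam i) = lam \<and> delta (lift lam i) = i"
  shows "gen_cong (atoms (tilde S deg))
           ({(lift lam i, lift mu i) | lam mu i. (lam, mu) \<in> \<Lambda> \<and> i \<le> deg (sum_mset lam)}
            \<union> {({#(a, k), (b, l)#}, {#(a, k + 1), (b, l - 1)#}) | a b k l.
                  a \<in> atoms S \<and> b \<in> atoms S \<and> k < deg a \<and> 1 \<le> l \<and> l \<le> deg b})
         = defcong (tilde S deg)"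
proof -
  have sub: "is_submonoid S" using aff by (simp add: affine_def)
  define R where "R = {(lift lam i, lift mu i) | lam mu i. (lam, mu) \<in> \<Lambda> \<and> i \<le> deg (sum_mset lam)}
            \<union> swaps S deg"
  have RR: "({(lift lam i, lift mu i) | lam mu i. (lam, mu) \<in> \<Lambda> \<and> i \<le> deg (sum_mset lam)}
            \<union> {({#(a, k), (b, l)#}, {#(a, k + 1), (b, l - 1)#}) | a b k l.
                  a \<in> atoms S \<and> b \<in> atoms S \<and> k < deg a \<and> 1 \<le> l \<and> l \<le> deg b}) = R"
    by (simp add: R_def swaps_def)
  have SW: "swaps S deg \<subseteq> R" by (simp add: R_def)
  have LR: "\<And>lam mu i. (lam, mu) \<in> \<Lambda> \<Longrightarrow> i \<le> deg (sum_mset lam) \<Longrightarrow> (lift lam i, lift mu i) \<in> R"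
    by (auto simp: R_def)
  have Rsub: "R \<subseteq> defcong (tilde S deg)"
  proof
    fix p assume "p \<in> R"
    then consider (L) lam mu i where "p = (lift lam i, lift mu i)" "(lam, mu) \<in> \<Lambda>" "i \<le> deg (sum_mset lam)"
      | (W) a b k l where "p = ({#(a, k), (b, l)#}, {#(a, k + 1), (b, l - 1)#})"
          "a \<in> atoms S" "b \<in> atoms S" "k < deg a" "1 \<le> l" "l \<le> deg b"
      unfolding R_def swaps_def by blast
    then show "p \<in> defcong (tilde S deg)"
    proof cases
      case L
      have "(lam, mu) \<in> defcong S" using L gen gen_cong.base by blast
      then have sm: "sum_mset lam = sum_mset mu" by (simp add: defcong_def)
      have L1: "set_mset (lift lam i) \<subseteq> atoms (tilde S deg) \<and> kappa (lift lam i) = lam \<and> delta (lift lam i) = i"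
        using lift_ok L by blast
      have L2: "set_mset (lift mu i) \<subseteq> atoms (tilde S deg) \<and> kappa (lift mu i) = mu \<and> delta (lift mu i) = i"
        using lift_ok L sm by (metis)
      show ?thesis using L L1 L2 sm by (simp add: defcong_def sum_mset_tilde[of "lift lam i"] sum_mset_tilde[of "lift mu i"])
    next
      case W
      then show ?thesis by (auto simp: defcong_def atoms_tilde[OF sub red grad])
    qed
  qed
  have "gen_cong (atoms (tilde S deg)) R = defcong (tilde S deg)"
  proof (intro set_eqI iffI)
    fix p assume "p \<in> gen_cong (atoms (tilde S deg)) R"
    then show "p \<in> defcong (tilde S deg)"
      using defcong_tilde_closed[OF sub red grad _ Rsub] by (cases p) auto
  next
    fix p assume "p \<in> defcong (tilde S deg)"
    then obtain \<alpha> \<gamma> where p: "p = (\<alpha>, \<gamma>)" "set_mset \<alpha> \<subseteq> atoms (tilde S deg)"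
      "set_mset \<gamma> \<subseteq> atoms (tilde S deg)" "sum_mset \<alpha> = sum_mset \<gamma>"
      by (auto simp: defcong_def)
    have ks: "sum_mset (kappa \<alpha>) = sum_mset (kappa \<gamma>)" "delta \<alpha> = delta \<gamma>"
      using p(4) by (simp_all add: sum_mset_tilde[of \<alpha>] sum_mset_tilde[of \<gamma>])
    have "(kappa \<alpha>, kappa \<gamma>) \<in> defcong S"
      using ks kappa_atoms[OF sub red grad p(2)] kappa_atoms[OF sub red grad p(3)] by (simp add: defcong_def)
    then have "(kappa \<alpha>, kappa \<gamma>) \<in> gen_cong (atoms S) \<Lambda>" using gen by simp
    from claim[OF sub red grad SW gen lift_ok LR this] p ks show "p \<in> gen_cong (atoms (tilde S deg)) R"
      by blast
  qed
  then show ?thesis using RR by simp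
qed

end
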